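(* Let $I(\gamma)$ be the ideal of $S^G$ generated by $\{P_\iota:\iota\in U_\#(\gamma)\}$. Then the closed subvariety $\mathcal{V}(I(\gamma))$ of $V/G$ defined by $I(\gamma)$ equals the fixed-point set $(V/G)^\gamma$.
   Context: Let $K$ be an algebraically closed field of characteristic $0$, $V$ an $r$-dimensional $K$-vector space and $G\subset\mathrm{GL}(V)$ a finite group generated by (pseudo)reflections. Let $S$ be the graded algebra of polynomial functions on $V$, with $\mathrm{GL}(V)$ acting by $(gf)(v)=f(g^{-1}v)$; $V/G$ is the quotient variety, with coordinate ring $S^G$, on which $\gamma$ acts. Fix a semisimple $\gamma\in\mathrm{GL}(V)$ normalising $G$. There is a set $\{P_\iota:\iota\in\mathcal{B}(\gamma)\}$ of $r$ homogeneous algebraically independent generators of $S^G$ (basic invariants), indexed by a finite set $\mathcal{B}(\gamma)$, with $\gamma(P_\iota)=\varepsilon_\iota P_\iota$ for scalars $\varepsilon_\iota\in K^\times$; let $U_\#(\gamma)=\{\iota\in\mathcal{B}(\gamma):\varepsilon_\iota\neq 1\}$. *)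

theory Defs
  imports "HOL-Analysis.Analysis" "HOL-Computational_Algebra.Polynomial"
begin

text \<open>Polynomial functions in the coordinates indexed by a set A
  (as functions on coordinate vectors). Over an infinite field these are
  the same as polynomials.\<close>
inductive_set polys :: "'i set \<Rightarrow> (('i \<Rightarrow> 'k::comm_ring_1) \<Rightarrow> 'k) set" for A where
  const: "(\<lambda>x. c) \<in> polys A"
| coord: "i \<in> A \<Longrightarrow> (\<lambda>x. x i) \<in> polys A"
| add: "p \<in> polys A \<Longrightarrow> q \<in> polys A \<Longrightarrow> (\<lambda>x. p x + q x) \<in> polys A"
| mult: "p \<in> polys A \<Longrightarrow> q \<in> polys A \<Longrightarrow> (\<lambda>x. p x * q x) \<in> polys A"

definition polyfuns :: "('k::comm_ring_1^'n \<Rightarrow> 'k) set" where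
  "polyfuns = {(\<lambda>v. Q (vec_nth v)) | Q. Q \<in> polys UNIV}"

definition homogeneous :: "('k::comm_ring_1^'n \<Rightarrow> 'k) \<Rightarrow> nat \<Rightarrow> bool" where
  "homogeneous f d \<longleftrightarrow> f \<in> polyfuns \<and> (\<forall>t v. f (t *s v) = t ^ d * f v)"

definition act :: "'k::field^'n^'n \<Rightarrow> ('k^'n \<Rightarrow> 'k) \<Rightarrow> ('k^'n \<Rightarrow> 'k)" where
  "act g f = (\<lambda>v. f (matrix_inv g *v v))"

definition invariants :: "('k::field^'n^'n) set \<Rightarrow> ('k^'n \<Rightarrow> 'k) set" where
  "invariants G = {f \<in> polyfuns. \<forall>g\<in>G. act g f = f}"

definition pseudoreflection :: "'k::field^'n^'n \<Rightarrow> bool" where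
  "pseudoreflection g \<longleftrightarrow> invertible g \<and> g \<noteq> mat 1 \<and> rank (g - mat 1) = 1"

inductive_set group_gen :: "('k::field^'n^'n) set \<Rightarrow> ('k^'n^'n) set" for R where
  one: "mat 1 \<in> group_gen R"
| mul: "r \<in> R \<Longrightarrow> x \<in> group_gen R \<Longrightarrow> r ** x \<in> group_gen R"
| mul_inv: "r \<in> R \<Longrightarrow> x \<in> group_gen R \<Longrightarrow> matrix_inv r ** x \<in> group_gen R"

definition finite_reflection_group :: "('k::field^'n^'n) set \<Rightarrow> bool" where
  "finite_reflection_group G \<longleftrightarrow> finite G \<and> (\<forall>g\<in>G. invertible g) \<and> mat 1 \<in> G
     \<and> (\<forall>g\<in>G. \<forall>h\<in>G. g ** h \<in> G) \<and> (\<forall>g\<in>G. matrix_inv g \<in> G)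
     \<and> G = group_gen {g\<in>G. pseudoreflection g}"

definition semisimple :: "'k::field^'n^'n \<Rightarrow> bool" where
  "semisimple g \<longleftrightarrow> (\<exists>P::'k^'n^'n. invertible P \<and>
     (\<forall>i j. i \<noteq> j \<longrightarrow> (P ** g ** matrix_inv P) $ i $ j = 0))"

definition basic_invariants ::
  "('k::field^'n^'n) set \<Rightarrow> 'i set \<Rightarrow> ('i \<Rightarrow> 'k^'n \<Rightarrow> 'k) \<Rightarrow> bool" where
  "basic_invariants G B P \<longleftrightarrow> finite B \<and> card B = CARD('n)
     \<and> (\<forall>\<iota>\<in>B. P \<iota> \<in> invariants G \<and> (\<exists>d. homogeneous (P \<iota>) d))
     \<and> invariants G = {(\<lambda>v. Q (\<lambda>\<iota>. P \<iota> v)) | Q. Q \<in> polys B}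
     \<and> (\<forall>Q \<in> polys B. (\<forall>v. Q (\<lambda>\<iota>. P \<iota> v) = 0) \<longrightarrow> (\<forall>x. Q x = 0))"

definition orbit :: "('k::semiring_1^'n^'n) set \<Rightarrow> 'k^'n \<Rightarrow> ('k^'n) set" where
  "orbit G v = (\<lambda>g. g *v v) ` G"

text \<open>Points of V/G, identified with G-orbits in V.\<close>
definition quotient_points :: "('k::semiring_1^'n^'n) set \<Rightarrow> ('k^'n) set set" where
  "quotient_points G = {orbit G v | v. True}"

definition zero_locus :: "('k::semiring_1^'n^'n) set \<Rightarrow> ('k^'n \<Rightarrow> 'k) set \<Rightarrow> ('k^'n) set set" where
  "zero_locus G I = {X \<in> quotient_points G. \<forall>f\<in>I. \<forall>v\<in>X. f v = 0}"

definition fixed_points :: "('k::semiring_1^'n^'n) set \<Rightarrow> 'k^'n^'n \<Rightarrow> ('k^'n) set set" where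
  "fixed_points G \<gamma> = {X \<in> quotient_points G. (\<lambda>w. \<gamma> *v w) ` X = X}"

definition gen_ideal :: "('k::field^'n^'n) set \<Rightarrow> 'i set \<Rightarrow> ('i \<Rightarrow> 'k^'n \<Rightarrow> 'k) \<Rightarrow> ('k^'n \<Rightarrow> 'k) set" where
  "gen_ideal G U P = {(\<lambda>v. \<Sum>\<iota>\<in>U. a \<iota> v * P \<iota> v) | a. \<forall>\<iota>\<in>U. a \<iota> \<in> invariants G}"

end

theory Submission
  imports Defs
begin

lemma minv:
  fixes A :: "'a::semiring_1^'n^'n"
  assumes "invertible A"
  shows "A ** matrix_inv A = mat 1" "matrix_inv A ** A = mat 1"
proof -
  have "\<exists>A'. A ** A' = mat 1 \<and> A' ** A = mat 1" using assms by (simp add: invertible_def)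
  then have "A ** matrix_inv A = mat 1 \<and> matrix_inv A ** A = mat 1"
    unfolding matrix_inv_def by (rule someI_ex)
  then show "A ** matrix_inv A = mat 1" "matrix_inv A ** A = mat 1" by auto
qed

lemma minv_cancel:
  fixes A :: "'a::semiring_1^'n^'n"
  assumes "invertible A"
  shows "matrix_inv A *v (A *v x) = x" "A *v (matrix_inv A *v x) = x"
  using minv[OF assms] by (simp_all add: matrix_vector_mul_assoc)

lemma polys_local:
  assumes "Q \<in> polys A" "\<forall>i\<in>A. x i = y i"
  shows "Q x = Q y"
  using assms by (induction rule: polys.induct) auto

lemma pf_const: "(\<lambda>v. c) \<in> (polyfuns :: ('k::comm_ring_1^'n \<Rightarrow> 'k) set)"
  unfolding polyfuns_def by (auto intro!: exI[of _ "\<lambda>x. c"] polys.const)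

lemma pf_coord: "(\<lambda>v. v $ i) \<in> (polyfuns :: ('k::comm_ring_1^'n \<Rightarrow> 'k) set)"
  unfolding polyfuns_def by (auto intro!: exI[of _ "\<lambda>x. x i"] polys.coord)

lemma pf_add:
  assumes "f \<in> polyfuns" "g \<in> polyfuns"
  shows "(\<lambda>v. f v + g v) \<in> (polyfuns :: ('k::comm_ring_1^'n \<Rightarrow> 'k) set)"
proof -
  obtain Q R where "Q \<in> polys UNIV" "R \<in> polys UNIV" "f = (\<lambda>v. Q (vec_nth v))" "g = (\<lambda>v. R (vec_nth v))"
    using assms unfolding polyfuns_def by auto
  then show ?thesis unfolding polyfuns_def
    by (auto intro!: exI[of _ "\<lambda>x. Q x + R x"] polys.add)
qed

lemma pf_mult:
  assumes "f \<in> polyfuns" "g \<in> polyfuns"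
  shows "(\<lambda>v. f v * g v) \<in> (polyfuns :: ('k::comm_ring_1^'n \<Rightarrow> 'k) set)"
proof -
  obtain Q R where "Q \<in> polys UNIV" "R \<in> polys UNIV" "f = (\<lambda>v. Q (vec_nth v))" "g = (\<lambda>v. R (vec_nth v))"
    using assms unfolding polyfuns_def by auto
  then show ?thesis unfolding polyfuns_def
    by (auto intro!: exI[of _ "\<lambda>x. Q x * R x"] polys.mult)
qed

lemma pf_diff:
  assumes "f \<in> polyfuns" "g \<in> polyfuns"
  shows "(\<lambda>v. f v - g v) \<in> (polyfuns :: ('k::comm_ring_1^'n \<Rightarrow> 'k) set)"
proof -
  have "(\<lambda>v. f v + (-1) * g v) \<in> (polyfuns :: ('k::comm_ring_1^'n \<Rightarrow> 'k) set)"
    by (intro pf_add pf_mult pf_const assms)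
  then show ?thesis by simp
qed

lemma pf_sum:
  assumes "finite S" "\<forall>s\<in>S. F s \<in> polyfuns"
  shows "(\<lambda>v. \<Sum>s\<in>S. F s v) \<in> (polyfuns :: ('k::comm_ring_1^'n \<Rightarrow> 'k) set)"
  using assms
proof (induction S rule: finite_induct)
  case empty then show ?case using pf_const[of 0] by simp
next
  case (insert x S') then show ?case using pf_add[of "F x" "\<lambda>v. \<Sum>s\<in>S'. F s v"] by simp
qed

lemma pf_prod:
  assumes "finite S" "\<forall>s\<in>S. F s \<in> polyfuns"
  shows "(\<lambda>v. \<Prod>s\<in>S. F s v) \<in> (polyfuns :: ('k::comm_ring_1^'n \<Rightarrow> 'k) set)"
  using assms
proof (induction S rule: finite_induct)
  case empty then show ?case using pf_const[of 1] by simp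
next
  case (insert x S') then show ?case using pf_mult[of "F x" "\<lambda>v. \<Prod>s\<in>S'. F s v"] by simp
qed

lemma pf_lin_aux:
  fixes g :: "'k::comm_ring_1^'n^'n"
  assumes "Q \<in> polys UNIV"
  shows "(\<lambda>v. Q (vec_nth (g *v v))) \<in> polyfuns"
  using assms
proof (induction rule: polys.induct)
  case (const c) then show ?case by (rule pf_const)
next
  case (coord i)
  have "(\<lambda>v. \<Sum>j\<in>UNIV. g$i$j * v$j) \<in> (polyfuns :: ('k^'n \<Rightarrow> 'k) set)"
    by (intro pf_sum ballI pf_mult pf_const pf_coord) simp
  then show ?case by (simp add: matrix_vector_mult_def)
next
  case (add p q) then show ?case using pf_add by blast
next
  case (mult p q) then show ?case using pf_mult by blast
qed

lemma pf_lin: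
  fixes g :: "'k::comm_ring_1^'n^'n"
  assumes "f \<in> polyfuns"
  shows "(\<lambda>v. f (g *v v)) \<in> polyfuns"
proof -
  obtain Q where "Q \<in> polys UNIV" "f = (\<lambda>v. Q (vec_nth v))"
    using assms unfolding polyfuns_def by auto
  then show ?thesis using pf_lin_aux[of Q g] by simp
qed

lemma pf_affine: "(\<lambda>x. (x$i - c) / d) \<in> (polyfuns :: ('k::field^'n \<Rightarrow> 'k) set)"
proof -
  have "(\<lambda>x. (x$i - c) * (1/d)) \<in> (polyfuns :: ('k::field^'n \<Rightarrow> 'k) set)"
    by (intro pf_mult pf_diff pf_const pf_coord)
  then show ?thesis by simp
qed

lemma separate:
  fixes A C :: "('k::field^'n) set"
  assumes "finite A" "finite C" "A \<inter> C = {}"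
  shows "\<exists>p\<in>polyfuns. (\<forall>u\<in>A. p u = 0) \<and> (\<forall>y\<in>C. p y = 1)"
proof -
  define ix where "ix u y = (SOME i. y $ i \<noteq> u $ i)" for u y :: "'k^'n"
  have ix: "y $ ix u y \<noteq> u $ ix u y" if "u \<in> A" "y \<in> C" for u y
  proof -
    have "u \<noteq> y" using assms(3) that by auto
    then have "\<exists>i. y $ i \<noteq> u $ i" by (metis vec_eq_iff)
    then show ?thesis unfolding ix_def by (rule someI_ex)
  qed
  define r where "r y x = (\<Prod>u\<in>A. (x $ ix u y - u $ ix u y) / (y $ ix u y - u $ ix u y))" for y x
  define p where "p x = 1 - (\<Prod>y\<in>C. 1 - r y x)" for x
  have "p \<in> polyfuns" unfolding p_def r_def
    by (intro pf_diff pf_const pf_prod ballI pf_affine assms)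
  moreover have "p u = 0" if "u \<in> A" for u
  proof -
    have "r y u = 0" for y unfolding r_def using that assms(1)
      by (intro prod_zero bexI[of _ u]) auto
    then show ?thesis unfolding p_def by simp
  qed
  moreover have "p y = 1" if "y \<in> C" for y
  proof -
    have "r y y = 1" unfolding r_def using that ix by (intro prod.neutral) auto
    then have "(\<Prod>y\<in>C. 1 - r y y') = 0" if "y' \<in> C" "r y' y' = 1" for y'
      using assms(2) that by (intro prod_zero bexI[of _ y']) auto
    then show ?thesis unfolding p_def using that \<open>r y y = 1\<close> by simp
  qed
  ultimately show ?thesis by blast
qed


lemma inv_const_orbit:
  assumes "f \<in> invariants G" "g \<in> G" "invertible g"
  shows "f (g *v x) = f x"
proof -
  have "act g f = f" using assms unfolding invariants_def by auto
  then have "act g f (g *v x) = f (g *v x)" by simp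
  then show ?thesis unfolding act_def using minv_cancel[OF assms(3)] by simp
qed

theorem lemma5p1:
  fixes G :: "('k::{alg_closed_field, field_char_0}^'n^'n) set"
    and \<gamma> :: "'k^'n^'n"
    and B :: "'i set" and P :: "'i \<Rightarrow> 'k^'n \<Rightarrow> 'k" and \<epsilon> :: "'i \<Rightarrow> 'k"
  assumes "finite_reflection_group G"
    and "invertible \<gamma>" and "semisimple \<gamma>"
    and "(\<lambda>g. \<gamma> ** g ** matrix_inv \<gamma>) ` G = G"
    and "basic_invariants G B P"
    and "\<forall>\<iota>\<in>B. \<epsilon> \<iota> \<noteq> 0 \<and> act \<gamma> (P \<iota>) = (\<lambda>v. \<epsilon> \<iota> * P \<iota> v)"
  shows "zero_locus G (gen_ideal G {\<iota>\<in>B. \<epsilon> \<iota> \<noteq> 1} P) = fixed_points G \<gamma>"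
proof -
  let ?U = "{\<iota>\<in>B. \<epsilon> \<iota> \<noteq> 1}"
  have finG: "finite G" and Ginv: "\<forall>g\<in>G. invertible g" and G1: "mat 1 \<in> G"
    and Gmul: "\<forall>g\<in>G. \<forall>h\<in>G. g ** h \<in> G" and Gminv: "\<forall>g\<in>G. matrix_inv g \<in> G"
    using assms(1) unfolding finite_reflection_group_def by auto
  have finB: "finite B" and Pinv: "\<forall>\<iota>\<in>B. P \<iota> \<in> invariants G"
    and invG: "invariants G = {(\<lambda>v. Q (\<lambda>\<iota>. P \<iota> v)) | Q. Q \<in> polys B}"
    using assms(5) unfolding basic_invariants_def by auto
  have eps: "P \<iota> v = \<epsilon> \<iota> * P \<iota> (\<gamma> *v v)" if "\<iota> \<in> B" for \<iota> v
  proof -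
    have "act \<gamma> (P \<iota>) (\<gamma> *v v) = \<epsilon> \<iota> * P \<iota> (\<gamma> *v v)" using assms(6) that by simp
    then show ?thesis unfolding act_def using minv_cancel[OF assms(2)] by simp
  qed
  have Pconst: "P \<iota> (g *v x) = P \<iota> x" if "\<iota> \<in> B" "g \<in> G" for \<iota> g x
    using inv_const_orbit[of "P \<iota>" G g x] Pinv Ginv that by auto
  have vin: "v \<in> orbit G v" for v
    unfolding orbit_def using G1 by (metis image_eqI matrix_vector_mul_lid)
  have const_inv: "(\<lambda>v. c) \<in> invariants G" for c
    unfolding invariants_def act_def using pf_const by auto
  have inj\<gamma>: "inj_on (\<lambda>w. \<gamma> *v w) S" for S
    by (metis inj_onI minv_cancel(1)[OF assms(2)])
  have finorb: "finite (orbit G v)" for v unfolding orbit_def using finG by simp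
  have fixI: "(\<lambda>w. \<gamma> *v w) ` orbit G v = orbit G v" if vin0: "\<gamma> *v v \<in> orbit G v" for v
  proof -
    obtain h where h: "h \<in> G" "\<gamma> *v v = h *v v" using vin0 unfolding orbit_def by blast
    have "(\<lambda>w. \<gamma> *v w) ` orbit G v \<subseteq> orbit G v"
    proof
      fix w assume "w \<in> (\<lambda>w. \<gamma> *v w) ` orbit G v"
      then obtain g where g: "g \<in> G" "w = \<gamma> *v (g *v v)" unfolding orbit_def by auto
      have "\<gamma> ** g ** matrix_inv \<gamma> \<in> G" using assms(4) g(1) by blast
      then have gg: "(\<gamma> ** g ** matrix_inv \<gamma>) ** h \<in> G" using Gmul h(1) by blast
      have "w = (\<gamma> ** g ** matrix_inv \<gamma>) *v (\<gamma> *v v)"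
      proof -
        have "(\<gamma> ** g ** matrix_inv \<gamma>) ** \<gamma> = (\<gamma> ** g) ** (matrix_inv \<gamma> ** \<gamma>)"
          by (simp add: matrix_mul_assoc)
        then have "(\<gamma> ** g ** matrix_inv \<gamma>) ** \<gamma> = \<gamma> ** g"
          using minv(2)[OF assms(2)] by simp
        then show ?thesis using g(2) by (simp add: matrix_vector_mul_assoc)
      qed
      also have "\<dots> = ((\<gamma> ** g ** matrix_inv \<gamma>) ** h) *v v"
        using h(2) by (simp add: matrix_vector_mul_assoc)
      finally show "w \<in> orbit G v" unfolding orbit_def using gg by blast
    qed
    moreover have "card ((\<lambda>w. \<gamma> *v w) ` orbit G v) = card (orbit G v)"
      by (rule card_image[OF inj\<gamma>])
    ultimately show ?thesis using finorb by (simp add: card_subset_eq)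
  qed
  show ?thesis
  proof (rule set_eqI, rule iffI)
    fix X assume X: "X \<in> zero_locus G (gen_ideal G ?U P)"
    then obtain v where v: "X = orbit G v" unfolding zero_locus_def quotient_points_def by auto
    have zero: "P \<iota> v = 0" if "\<iota> \<in> ?U" for \<iota>
    proof -
      define a where "a = (\<lambda>\<kappa> (w::'k^'n). if \<kappa> = \<iota> then (1::'k) else 0)"
      have "(\<lambda>w. \<Sum>\<kappa>\<in>?U. a \<kappa> w * P \<kappa> w) \<in> gen_ideal G ?U P"
        unfolding gen_ideal_def a_def using const_inv by auto
      then have "(\<Sum>\<kappa>\<in>?U. a \<kappa> v * P \<kappa> v) = 0"
      proof -
        have H: "\<forall>f\<in>gen_ideal G ?U P. \<forall>w\<in>X. f w = 0" using X unfolding zero_locus_def by blast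
        have "v \<in> X" using v vin by simp
        then show ?thesis using bspec[OF H \<open>(\<lambda>w. \<Sum>\<kappa>\<in>?U. a \<kappa> w * P \<kappa> w) \<in> gen_ideal G ?U P\<close>] by simp
      qed
      moreover have "(\<Sum>\<kappa>\<in>?U. a \<kappa> v * P \<kappa> v) = P \<iota> v"
      proof -
        have "(\<Sum>\<kappa>\<in>?U. a \<kappa> v * P \<kappa> v) = (\<Sum>\<kappa>\<in>?U. if \<kappa> = \<iota> then P \<kappa> v else 0)"
          unfolding a_def by (rule sum.cong) auto
        also have "\<dots> = P \<iota> v" using that finB by (simp add: sum.delta)
        finally show ?thesis .
      qed
      ultimately show ?thesis by simp
    qed
    have Pg: "P \<iota> (\<gamma> *v v) = P \<iota> v" if "\<iota> \<in> B" for \<iota>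
    proof (cases "\<epsilon> \<iota> = 1")
      case True then show ?thesis using eps[OF that, of v] by simp
    next
      case False
      then have "P \<iota> v = 0" using zero that by auto
      then show ?thesis using eps[OF that, of v] assms(6) that by auto
    qed
    have "\<gamma> *v v \<in> orbit G v"
    proof (rule ccontr)
      assume nin: "\<gamma> *v v \<notin> orbit G v"
      have disj: "orbit G v \<inter> orbit G (\<gamma> *v v) = {}"
      proof (rule ccontr)
        assume "orbit G v \<inter> orbit G (\<gamma> *v v) \<noteq> {}"
        then obtain g g' where gg: "g \<in> G" "g' \<in> G" "g *v v = g' *v (\<gamma> *v v)"
          unfolding orbit_def by auto
        have "\<gamma> *v v = matrix_inv g' *v (g' *v (\<gamma> *v v))"
          using minv_cancel(1) Ginv gg(2) by metis
        also have "\<dots> = (matrix_inv g' ** g) *v v" using gg(3) by (metis matrix_vector_mul_assoc)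
        finally show False using nin Gmul Gminv gg unfolding orbit_def by blast
      qed
      obtain p where p: "p \<in> polyfuns" "\<forall>u\<in>orbit G v. p u = 0" "\<forall>y\<in>orbit G (\<gamma> *v v). p y = 1"
        using separate[OF finorb finorb disj] by blast
      define f where "f x = (\<Prod>g\<in>G. p (g *v x))" for x
      have fpf: "f \<in> polyfuns" unfolding f_def
        using finG p(1) by (intro pf_prod ballI pf_lin) auto
      have "act h f = f" if hG: "h \<in> G" for h
      proof
        fix x
        have hi: "invertible h" using Ginv hG by auto
        have "act h f x = (\<Prod>g\<in>G. p ((g ** matrix_inv h) *v x))"
          unfolding act_def f_def by (simp add: matrix_vector_mul_assoc)
        also have "\<dots> = (\<Prod>g\<in>G. p (g *v x))"
        proof (rule prod.reindex_bij_witness[where i="\<lambda>g. g ** h" and j="\<lambda>g. g ** matrix_inv h"])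
          fix a assume "a \<in> G"
          show "a ** matrix_inv h ** h = a" using minv(2)[OF hi] by (metis matrix_mul_assoc matrix_mul_rid)
          show "a ** h \<in> G" using Gmul hG \<open>a \<in> G\<close> by blast
          show "a ** h ** matrix_inv h = a" using minv(1)[OF hi] by (metis matrix_mul_assoc matrix_mul_rid)
          show "a ** matrix_inv h \<in> G" using Gmul Gminv hG \<open>a \<in> G\<close> by blast
          show "p ((a ** matrix_inv h) *v x) = p ((a ** matrix_inv h) *v x)" by simp
        qed
        finally show "act h f x = f x" unfolding f_def .
      qed
      then have "f \<in> invariants G" using fpf unfolding invariants_def by auto
      then obtain Q where Q: "Q \<in> polys B" "f = (\<lambda>w. Q (\<lambda>\<iota>. P \<iota> w))" using invG by auto
      have "f (\<gamma> *v v) = f v" unfolding Q(2) by (rule polys_local[OF Q(1)]) (simp add: Pg)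
      moreover have "f v = 0" unfolding f_def using finG G1 p(2) vin
        by (intro prod_zero bexI[of _ "mat 1"]) auto
      moreover have "f (\<gamma> *v v) = 1" unfolding f_def using p(3)
        by (intro prod.neutral ballI) (auto simp: orbit_def)
      ultimately show False by simp
    qed
    then show "X \<in> fixed_points G \<gamma>" using fixI X v
      unfolding fixed_points_def zero_locus_def by auto
  next
    fix X assume X: "X \<in> fixed_points G \<gamma>"
    then obtain v where v: "X = orbit G v" and XQ: "X \<in> quotient_points G"
      and fx: "(\<lambda>w. \<gamma> *v w) ` X = X"
      unfolding fixed_points_def quotient_points_def by auto
    have Pz: "P \<iota> w = 0" if iU: "\<iota> \<in> ?U" and wX: "w \<in> X" for \<iota> w
    proof -
      have iB: "\<iota> \<in> B" using iU by auto
      obtain g where g: "g \<in> G" "w = g *v v" using wX v unfolding orbit_def by auto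
      have "\<gamma> *v w \<in> X" using fx wX by blast
      then obtain g' where g': "g' \<in> G" "\<gamma> *v w = g' *v v" using v unfolding orbit_def by auto
      have "P \<iota> (\<gamma> *v w) = P \<iota> v" using g' Pconst iB by simp
      also have "\<dots> = P \<iota> w" using g Pconst iB by simp
      finally have "P \<iota> w = \<epsilon> \<iota> * P \<iota> w" using eps[OF iB, of w] by simp
      then have "(1 - \<epsilon> \<iota>) * P \<iota> w = 0" by (simp add: algebra_simps)
      then show ?thesis using iU by simp
    qed
    show "X \<in> zero_locus G (gen_ideal G ?U P)"
      unfolding zero_locus_def
    proof (intro CollectI conjI ballI XQ)
      fix f w assume f: "f \<in> gen_ideal G ?U P" and w: "w \<in> X"
      then obtain a where "f = (\<lambda>v. \<Sum>\<iota>\<in>?U. a \<iota> v * P \<iota> v)" unfolding gen_ideal_def by blast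
      then show "f w = 0" using Pz[OF _ w] by simp
    qed
  qed
qed

end
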